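(* Let $\Gamma$ be a finite graph with vertices $v_1,\dots,v_n$ ($n\ge2$) and edges $e_1,\dots,e_m$ with edge dimensions $\vec e=(e_1,\dots,e_m)$, and let $V_1,\dots,V_n$ be complex vector spaces, $\dim V_j=\mathbf v_j$. Suppose $v_1$ has valence one and is joined by the edge $e_1$ to $v_2$, and suppose $\mathbf v_1\le e_1$. Let $\tilde\Gamma$ be the graph obtained from $\Gamma$ by deleting $v_1$ and $e_1$, with the remaining edges keeping their dimensions $\vec{\tilde e}=(e_2,\dots,e_m)$, and attach $\tilde V_1:=V_1\otimes V_2$ to the vertex $v_2$ and $V_j$ to $v_j$ for $j\ge3$. Then, under the natural identification $V_1\otimes\cdots\otimes V_n=\tilde V_1\otimes V_3\otimes\cdots\otimes V_n$, $$TNS(\Gamma,\vec e,V_1\otimes\cdots\otimes V_n)=TNS(\tilde\Gamma,\vec{\tilde e},\tilde V_1\otimes V_3\otimes\cdots\otimes V_n).$$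
   Context: Tensor network states: for a finite graph with vector spaces $W_j$ attached to vertices and complex vector spaces $E_s$ of dimension $e_s$ attached to edges (edges oriented arbitrarily), $TNS(\Gamma,\vec e,W_1\otimes\cdots\otimes W_k)$ is the set of tensors $T\in W_1\otimes\cdots\otimes W_k$ such that there are $T_j\in W_j\otimes(\bigotimes_{s\text{ entering }v_j}E_s)\otimes(\bigotimes_{t\text{ leaving }v_j}E_t^* )$ with $T=\mathrm{Con}(T_1\otimes\cdots\otimes T_k)$, where $\mathrm{Con}$ contracts every $E_s$ with $E_s^*$. *)

theory Defs
  imports Complex_Main "HOL-Library.FuncSet" "HOL-Library.Nat_Bijection"
begin

(* Vertices: a finite set V of nats; edges: a finite set E of nats,
   edge s oriented from src s to tgt s (s enters tgt s, leaves src s).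
   Vertex v carries W_v = C^(P v) (basis P v, dim = card (P v)); edge s carries
   E_s = C^{..<e s}.  A tensor in the tensor product of the W_v is an (extensional)
   function on multi-indices in PiE V P. *)

(* A local tensor at v: f i a b, with i the physical index, a giving the indices of
   the E_s factors (s entering v) and b those of the E_t^* factors (t leaving v);
   it may only depend on the entries of a at entering edges and of b at leaving edges. *)
definition local_ok ::
  "nat set \<Rightarrow> (nat \<Rightarrow> nat) \<Rightarrow> (nat \<Rightarrow> nat) \<Rightarrow> nat
   \<Rightarrow> (nat \<Rightarrow> (nat \<Rightarrow> nat) \<Rightarrow> (nat \<Rightarrow> nat) \<Rightarrow> complex) \<Rightarrow> bool" where
  "local_ok E src tgt v f \<longleftrightarrow>
     (\<forall>i a a' b b'. (\<forall>s\<in>E. tgt s = v \<longrightarrow> a s = a' s) \<longrightarrow>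
                    (\<forall>s\<in>E. src s = v \<longrightarrow> b s = b' s) \<longrightarrow> f i a b = f i a' b')"

(* TNS(Gamma, e, W_1 (x) ... (x) W_k): contraction pairs each E_s with E_s^*, i.e. the
   index of E_s at tgt s equals the index of E_s^* at src s, summed over {..<e s}. *)
definition TNS ::
  "nat set \<Rightarrow> nat set \<Rightarrow> (nat \<Rightarrow> nat) \<Rightarrow> (nat \<Rightarrow> nat) \<Rightarrow> (nat \<Rightarrow> nat)
   \<Rightarrow> (nat \<Rightarrow> nat set) \<Rightarrow> ((nat \<Rightarrow> nat) \<Rightarrow> complex) set" where
  "TNS V E src tgt e P =
    {T. (\<forall>\<iota>. \<iota> \<notin> PiE V P \<longrightarrow> T \<iota> = 0) \<and>
        (\<exists>Tl. (\<forall>v\<in>V. local_ok E src tgt v (Tl v)) \<and>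
              (\<forall>\<iota>\<in>PiE V P. T \<iota> =
                 (\<Sum>\<alpha>\<in>PiE E (\<lambda>s. {..<e s}). \<Prod>v\<in>V. Tl v (\<iota> v) \<alpha> \<alpha>)))}"

(* Natural identification: a tensor T' on the merged graph (vertex 2 carrying
   V_1 (x) V_2 with basis prod_encode ` (P 1 \<times> P 2)) viewed as a tensor on the
   original vertices {1..n}. *)
definition merge12 :: "nat \<Rightarrow> (nat \<Rightarrow> nat set) \<Rightarrow> ((nat \<Rightarrow> nat) \<Rightarrow> complex) \<Rightarrow> (nat \<Rightarrow> nat) \<Rightarrow> complex" where
  "merge12 n P T' \<iota> =
     (if \<iota> \<in> PiE {1..n} P
      then T' (restrict (\<iota>(2 := prod_encode (\<iota> 1, \<iota> 2))) {2..n}) else 0)"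

end

theory Submission
  imports Defs
begin

lemma sum_PiE_insert:
  assumes "k \<notin> S"
  shows "(\<Sum>\<alpha>\<in>PiE (insert k S) B. F \<alpha>) = (\<Sum>x\<in>B k. \<Sum>\<alpha>\<in>PiE S B. F (\<alpha>(k:=x)))"
proof -
  have "(\<Sum>\<alpha>\<in>PiE (insert k S) B. F \<alpha>) = (\<Sum>p\<in>B k \<times> PiE S B. F ((\<lambda>(y, g). g(k := y)) p))"
    unfolding PiE_insert_eq by (rule sum.reindex[OF inj_combinator[OF assms], unfolded comp_def])
  also have "\<dots> = (\<Sum>x\<in>B k. \<Sum>\<alpha>\<in>PiE S B. F (\<alpha>(k:=x)))"
    by (simp add: sum.cartesian_product split_def)
  finally show ?thesis .
qed

lemma local_ok_upd:
  assumes "local_ok E src tgt v f" "k \<in> E \<Longrightarrow> src k \<noteq> v \<and> tgt k \<noteq> v"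
  shows "f i (a(k:=x)) (b(k:=y)) = f i a b"
  using assms unfolding local_ok_def by (metis fun_upd_other)

lemma local_ok_mono:
  assumes "local_ok E' src tgt v f" "E' \<subseteq> E"
  shows "local_ok E src tgt v f"
  using assms unfolding local_ok_def by blast

lemma local_ok_shrink:
  assumes "local_ok E src tgt v f" "\<forall>s\<in>E - E'. src s \<noteq> v \<and> tgt s \<noteq> v"
  shows "local_ok E' src tgt v f"
  using assms unfolding local_ok_def by (metis DiffI)

lemma dir1:
  fixes n m :: nat and src tgt e :: "nat \<Rightarrow> nat" and P :: "nat \<Rightarrow> nat set"
  assumes "n \<ge> 2" and "m \<ge> 1"
    and "\<forall>s\<in>{1..m}. src s \<in> {1..n} \<and> tgt s \<in> {1..n}"
    and "\<forall>j\<in>{1..n}. finite (P j)"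
    and s1: "{src 1, tgt 1} = {1, 2}"
    and s2: "\<forall>s\<in>{2..m}. src s \<noteq> 1 \<and> tgt s \<noteq> 1"
    and "card (P 1) \<le> e 1"
    and TT: "T \<in> TNS {1..n} {1..m} src tgt e P"
  shows "T \<in> merge12 n P ` TNS {2..n} {2..m} src tgt e (P(2 := prod_encode ` (P 1 \<times> P 2)))"
proof -
  define P' where "P' = P(2 := prod_encode ` (P 1 \<times> P 2))"
  from TT obtain Tl where z: "\<forall>\<iota>. \<iota> \<notin> PiE {1..n} P \<longrightarrow> T \<iota> = 0"
    and loc: "\<forall>v\<in>{1..n}. local_ok {1..m} src tgt v (Tl v)"
    and TS: "\<forall>\<iota>\<in>PiE {1..n} P. T \<iota> = (\<Sum>\<alpha>\<in>PiE {1..m} (\<lambda>s. {..<e s}). \<Prod>v\<in>{1..n}. Tl v (\<iota> v) \<alpha> \<alpha>)"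
    unfolding TNS_def by blast
  have E1: "{1..m} = insert 1 {2..m}" "(1::nat) \<notin> {2..m}" using assms(2) by auto
  have V1: "{1..n} = insert 1 (insert 2 {3..n})" "(1::nat) \<notin> insert 2 {3..n}" "(2::nat) \<notin> {3..n}"
    "{2..n} = insert 2 {3..n}"
    using assms(1) by auto
  have l1: "local_ok {1..m} src tgt 1 (Tl 1)" and l2: "local_ok {1..m} src tgt 2 (Tl 2)"
    using loc assms(1) by auto
  have out3: "v \<in> {3..n} \<Longrightarrow> src 1 \<noteq> v \<and> tgt 1 \<noteq> v" for v using s1
  proof -
    assume "v \<in> {3..n}"
    then have "v \<noteq> 1" "v \<noteq> 2" by auto
    moreover have "src 1 \<in> {1,2}" "tgt 1 \<in> {1,2}" using s1 by blast+
    ultimately show ?thesis by auto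
  qed
  define G where "G k a b = (\<Sum>x<e 1. Tl 1 (fst (prod_decode k)) (a(1:=x)) (b(1:=x)) *
                               Tl 2 (snd (prod_decode k)) (a(1:=x)) (b(1:=x)))" for k a b
  define Tl' where "Tl' v = (if v = 2 then G else Tl v)" for v
  define T' where "T' \<kappa> = (if \<kappa> \<in> PiE {2..n} P' then
      (\<Sum>\<alpha>\<in>PiE {2..m} (\<lambda>s. {..<e s}). \<Prod>v\<in>{2..n}. Tl' v (\<kappa> v) \<alpha> \<alpha>) else 0)" for \<kappa>
  have locG: "local_ok {2..m} src tgt 2 G"
    unfolding local_ok_def
  proof (intro allI impI)
    fix i :: nat and a a' b b' :: "nat \<Rightarrow> nat"
    assume ha: "\<forall>s\<in>{2..m}. tgt s = 2 \<longrightarrow> a s = a' s" and hb: "\<forall>s\<in>{2..m}. src s = 2 \<longrightarrow> b s = b' s"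
    show "G i a b = G i a' b'" unfolding G_def
    proof (rule sum.cong[OF refl])
      fix x
      have "Tl 1 (fst (prod_decode i)) (a(1:=x)) (b(1:=x)) = Tl 1 (fst (prod_decode i)) (a'(1:=x)) (b'(1:=x))"
      proof -
        have "\<forall>s\<in>{1..m}. tgt s = 1 \<longrightarrow> (a(1:=x)) s = (a'(1:=x)) s"
          using s2 E1(1) by auto
        moreover have "\<forall>s\<in>{1..m}. src s = 1 \<longrightarrow> (b(1:=x)) s = (b'(1:=x)) s"
          using s2 E1(1) by auto
        ultimately show ?thesis using l1 unfolding local_ok_def by blast
      qed
      moreover have "Tl 2 (snd (prod_decode i)) (a(1:=x)) (b(1:=x)) = Tl 2 (snd (prod_decode i)) (a'(1:=x)) (b'(1:=x))"
      proof -
        have "\<forall>s\<in>{1..m}. tgt s = 2 \<longrightarrow> (a(1:=x)) s = (a'(1:=x)) s"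
          using ha E1(1) by auto
        moreover have "\<forall>s\<in>{1..m}. src s = 2 \<longrightarrow> (b(1:=x)) s = (b'(1:=x)) s"
          using hb E1(1) by auto
        ultimately show ?thesis using l2 unfolding local_ok_def by blast
      qed
      ultimately show "Tl 1 (fst (prod_decode i)) (a(1:=x)) (b(1:=x)) * Tl 2 (snd (prod_decode i)) (a(1:=x)) (b(1:=x)) =
          Tl 1 (fst (prod_decode i)) (a'(1:=x)) (b'(1:=x)) * Tl 2 (snd (prod_decode i)) (a'(1:=x)) (b'(1:=x))"
        by simp
    qed
  qed
  have T'TNS: "T' \<in> TNS {2..n} {2..m} src tgt e P'"
    unfolding TNS_def
  proof (intro CollectI conjI allI impI exI[of _ Tl'] ballI)
    fix \<iota> assume "\<iota> \<notin> PiE {2..n} P'" then show "T' \<iota> = 0" by (simp add: T'_def)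
  next
    fix v assume v: "v \<in> {2..n}"
    show "local_ok {2..m} src tgt v (Tl' v)"
    proof (cases "v = 2")
      case True then show ?thesis using locG by (simp add: Tl'_def)
    next
      case False
      then have "v \<in> {3..n}" using v by auto
      have h1: "\<forall>s\<in>{1..m} - {2..m}. src s \<noteq> v \<and> tgt s \<noteq> v"
      proof
        fix s assume "s \<in> {1..m} - {2..m}"
        then have "s = 1" by auto
        then show "src s \<noteq> v \<and> tgt s \<noteq> v" using out3[OF \<open>v \<in> {3..n}\<close>] by simp
      qed
      have h2: "local_ok {1..m} src tgt v (Tl v)" using loc v by auto
      show ?thesis unfolding Tl'_def using False local_ok_shrink[OF h2 h1] by simp
    qed
  next
    fix \<iota> assume "\<iota> \<in> PiE {2..n} P'" then show "T' \<iota> = (\<Sum>\<alpha>\<in>PiE {2..m} (\<lambda>s. {..<e s}). \<Prod>v\<in>{2..n}. Tl' v (\<iota> v) \<alpha> \<alpha>)"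
      by (simp add: T'_def)
  qed
  have "T = merge12 n P T'"
  proof
    fix \<iota>
    show "T \<iota> = merge12 n P T' \<iota>"
    proof (cases "\<iota> \<in> PiE {1..n} P")
      case False then show ?thesis using z by (simp add: merge12_def)
    next
      case True
      define \<kappa> where "\<kappa> = restrict (\<iota>(2 := prod_encode (\<iota> 1, \<iota> 2))) {2..n}"
      have i12: "\<iota> 1 \<in> P 1" "\<iota> 2 \<in> P 2" using True assms(1) by auto
      have k: "\<kappa> \<in> PiE {2..n} P'"
        using True i12 unfolding \<kappa>_def P'_def by (auto simp: PiE_iff)
      have k2: "\<kappa> 2 = prod_encode (\<iota> 1, \<iota> 2)" using assms(1) by (simp add: \<kappa>_def)
      have k3: "v \<in> {3..n} \<Longrightarrow> \<kappa> v = \<iota> v" for v by (simp add: \<kappa>_def)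
      have "T' \<kappa> = (\<Sum>\<alpha>\<in>PiE {2..m} (\<lambda>s. {..<e s}). G (\<kappa> 2) \<alpha> \<alpha> * (\<Prod>v\<in>{3..n}. Tl v (\<iota> v) \<alpha> \<alpha>))"
        unfolding T'_def using k V1 k3 by (simp add: Tl'_def)
      also have "\<dots> = (\<Sum>\<alpha>\<in>PiE {2..m} (\<lambda>s. {..<e s}). \<Sum>x<e 1.
           Tl 1 (\<iota> 1) (\<alpha>(1:=x)) (\<alpha>(1:=x)) * Tl 2 (\<iota> 2) (\<alpha>(1:=x)) (\<alpha>(1:=x)) * (\<Prod>v\<in>{3..n}. Tl v (\<iota> v) \<alpha> \<alpha>))"
        unfolding G_def k2 by (simp add: sum_distrib_right)
      also have "\<dots> = (\<Sum>x<e 1. \<Sum>\<alpha>\<in>PiE {2..m} (\<lambda>s. {..<e s}).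
           Tl 1 (\<iota> 1) (\<alpha>(1:=x)) (\<alpha>(1:=x)) * Tl 2 (\<iota> 2) (\<alpha>(1:=x)) (\<alpha>(1:=x)) * (\<Prod>v\<in>{3..n}. Tl v (\<iota> v) \<alpha> \<alpha>))"
        by (rule sum.swap)
      also have "\<dots> = (\<Sum>x<e 1. \<Sum>\<alpha>\<in>PiE {2..m} (\<lambda>s. {..<e s}).
           \<Prod>v\<in>{1..n}. Tl v (\<iota> v) (\<alpha>(1:=x)) (\<alpha>(1:=x)))"
      proof (intro sum.cong refl)
        fix x \<alpha>
        have "(\<Prod>v\<in>{3..n}. Tl v (\<iota> v) \<alpha> \<alpha>) = (\<Prod>v\<in>{3..n}. Tl v (\<iota> v) (\<alpha>(1:=x)) (\<alpha>(1:=x)))"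
        proof (rule prod.cong[OF refl])
          fix v assume v: "v \<in> {3..n}"
          have "local_ok {1..m} src tgt v (Tl v)" using loc v by auto
          then show "Tl v (\<iota> v) \<alpha> \<alpha> = Tl v (\<iota> v) (\<alpha>(1:=x)) (\<alpha>(1:=x))"
            using local_ok_upd out3[OF v] by metis
        qed
        then show "Tl 1 (\<iota> 1) (\<alpha>(1:=x)) (\<alpha>(1:=x)) * Tl 2 (\<iota> 2) (\<alpha>(1:=x)) (\<alpha>(1:=x)) * (\<Prod>v\<in>{3..n}. Tl v (\<iota> v) \<alpha> \<alpha>) =
           (\<Prod>v\<in>{1..n}. Tl v (\<iota> v) (\<alpha>(1:=x)) (\<alpha>(1:=x)))"
          unfolding V1(1) using V1(2,3) by (simp add: mult.assoc)
      qed
      also have "\<dots> = (\<Sum>\<alpha>\<in>PiE (insert 1 {2..m}) (\<lambda>s. {..<e s}). \<Prod>v\<in>{1..n}. Tl v (\<iota> v) \<alpha> \<alpha>)"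
        by (rule sum_PiE_insert[OF E1(2), symmetric])
      also have "\<dots> = T \<iota>" using TS True unfolding E1(1)[symmetric] by simp
      finally have "T' \<kappa> = T \<iota>" .
      moreover have "merge12 n P T' \<iota> = T' \<kappa>"
        unfolding merge12_def \<kappa>_def by (rule if_P[OF True])
      ultimately show ?thesis by simp
    qed
  qed
  then show ?thesis using T'TNS unfolding P'_def by blast
qed

lemma dir2:
  fixes n m :: nat and src tgt e :: "nat \<Rightarrow> nat" and P :: "nat \<Rightarrow> nat set"
  assumes "n \<ge> 2" and "m \<ge> 1"
    and "\<forall>s\<in>{1..m}. src s \<in> {1..n} \<and> tgt s \<in> {1..n}"
    and fin: "\<forall>j\<in>{1..n}. finite (P j)"
    and s1: "{src 1, tgt 1} = {1, 2}"
    and s2: "\<forall>s\<in>{2..m}. src s \<noteq> 1 \<and> tgt s \<noteq> 1"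
    and ce: "card (P 1) \<le> e 1"
    and TT: "T \<in> merge12 n P ` TNS {2..n} {2..m} src tgt e (P(2 := prod_encode ` (P 1 \<times> P 2)))"
  shows "T \<in> TNS {1..n} {1..m} src tgt e P"
proof -
  define P' where "P' = P(2 := prod_encode ` (P 1 \<times> P 2))"
  from TT obtain T' where TD: "T = merge12 n P T'" and T'TNS: "T' \<in> TNS {2..n} {2..m} src tgt e P'"
    unfolding P'_def by blast
  from T'TNS obtain Tl' where
        loc': "\<forall>v\<in>{2..n}. local_ok {2..m} src tgt v (Tl' v)"
    and TS': "\<forall>\<kappa>\<in>PiE {2..n} P'. T' \<kappa> = (\<Sum>\<alpha>\<in>PiE {2..m} (\<lambda>s. {..<e s}). \<Prod>v\<in>{2..n}. Tl' v (\<kappa> v) \<alpha> \<alpha>)"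
    unfolding TNS_def by blast
  have E1: "{1..m} = insert 1 {2..m}" "(1::nat) \<notin> {2..m}" "(1::nat) \<in> {1..m}" using assms(2) by auto
  have V1: "{1..n} = insert 1 (insert 2 {3..n})" "(1::nat) \<notin> insert 2 {3..n}" "(2::nat) \<notin> {3..n}"
    "{2..n} = insert 2 {3..n}"
    using assms(1) by auto
  have st: "src 1 \<in> {1,2}" "tgt 1 \<in> {1,2}" "src 1 \<noteq> tgt 1" using s1
    by (auto simp: doubleton_eq_iff)
  have "finite (P 1)" using fin assms(1) by auto
  then obtain f where f: "f ` P 1 \<subseteq> {..<e 1}" "inj_on f (P 1)"
    using card_le_inj[of "P 1" "{..<e 1}"] ce by auto
  define idx1 where "idx1 a b = (if tgt 1 = 1 then a 1 else b (1::nat))" for a b :: "nat \<Rightarrow> nat"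
  define idx2 where "idx2 a b = (if tgt 1 = 2 then a 1 else b (1::nat))" for a b :: "nat \<Rightarrow> nat"
  define g where "g = the_inv_into (P 1) f"
  define F1 where "F1 i a b = (if idx1 a b = f i then 1 else (0::complex))" for i a b
  define F2 where "F2 i a b = (if idx2 a b \<in> f ` P 1 then Tl' 2 (prod_encode (g (idx2 a b), i)) a b else 0)" for i a b
  define Tl where "Tl v = (if v = 1 then F1 else if v = 2 then F2 else Tl' v)" for v
  have l2: "local_ok {2..m} src tgt 2 (Tl' 2)" using loc' assms(1) by auto
  show ?thesis unfolding TNS_def
  proof (intro CollectI conjI allI impI exI[of _ Tl] ballI)
    fix \<iota> assume "\<iota> \<notin> PiE {1..n} P" then show "T \<iota> = 0" by (simp add: TD merge12_def)
  next
    fix v assume v: "v \<in> {1..n}"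
    show "local_ok {1..m} src tgt v (Tl v)"
    proof (cases "v = 1")
      case True
      have "F1 i a b = F1 i a' b'" if ha: "\<forall>s\<in>{1..m}. tgt s = 1 \<longrightarrow> a s = a' s"
        and hb: "\<forall>s\<in>{1..m}. src s = 1 \<longrightarrow> b s = b' s" for i a a' b b'
      proof -
        have "idx1 a b = idx1 a' b'"
          unfolding idx1_def using ha hb E1(3) st by auto
        then show ?thesis unfolding F1_def by simp
      qed
      then show ?thesis using True unfolding Tl_def local_ok_def by simp
    next
      case False
      show ?thesis
      proof (cases "v = 2")
        case True
        have "F2 i a b = F2 i a' b'" if ha: "\<forall>s\<in>{1..m}. tgt s = 2 \<longrightarrow> a s = a' s"
          and hb: "\<forall>s\<in>{1..m}. src s = 2 \<longrightarrow> b s = b' s" for i a a' b b'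
        proof -
          have "idx2 a b = idx2 a' b'"
            unfolding idx2_def using ha hb E1(3) st by auto
          moreover have "Tl' 2 k a b = Tl' 2 k a' b'" for k
            using local_ok_mono[OF l2, of "{1..m}"] ha hb unfolding local_ok_def by auto
          ultimately show ?thesis unfolding F2_def by simp
        qed
        then show ?thesis using True unfolding Tl_def local_ok_def by simp
      next
        case False2: False
        then have "v \<in> {2..n}" using v False by auto
        then have "local_ok {2..m} src tgt v (Tl' v)" using loc' by auto
        then show ?thesis using False False2 local_ok_mono[of "{2..m}" src tgt v "Tl' v" "{1..m}"]
          unfolding Tl_def by auto
      qed
    qed
  next
    fix \<iota> assume True: "\<iota> \<in> PiE {1..n} P"
    define \<kappa> where "\<kappa> = restrict (\<iota>(2 := prod_encode (\<iota> 1, \<iota> 2))) {2..n}"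
    have i12: "\<iota> 1 \<in> P 1" "\<iota> 2 \<in> P 2" using True assms(1) by auto
    have k: "\<kappa> \<in> PiE {2..n} P'"
      using True i12 unfolding \<kappa>_def P'_def by (auto simp: PiE_iff)
    have k2: "\<kappa> 2 = prod_encode (\<iota> 1, \<iota> 2)" using assms(1) by (simp add: \<kappa>_def)
    have k3: "v \<in> {3..n} \<Longrightarrow> \<kappa> v = \<iota> v" for v by (simp add: \<kappa>_def)
    define c where "c = f (\<iota> 1)"
    have c: "c \<in> {..<e 1}" "c \<in> f ` P 1" "g c = \<iota> 1"
      using f i12 unfolding c_def g_def by (auto simp: the_inv_into_f_f)
    have "T \<iota> = T' \<kappa>"
      unfolding TD merge12_def \<kappa>_def by (rule if_P[OF True])
    also have "\<dots> = (\<Sum>\<alpha>\<in>PiE {2..m} (\<lambda>s. {..<e s}). Tl' 2 (prod_encode (\<iota> 1, \<iota> 2)) \<alpha> \<alpha> * (\<Prod>v\<in>{3..n}. Tl' v (\<iota> v) \<alpha> \<alpha>))"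
      using TS' k V1 k3 k2 by simp
    also have "\<dots> = (\<Sum>\<alpha>\<in>PiE {2..m} (\<lambda>s. {..<e s}). \<Sum>x<e 1. \<Prod>v\<in>{1..n}. Tl v (\<iota> v) (\<alpha>(1:=x)) (\<alpha>(1:=x)))"
    proof (rule sum.cong[OF refl])
      fix \<alpha>
      have "(\<Sum>x<e 1. \<Prod>v\<in>{1..n}. Tl v (\<iota> v) (\<alpha>(1:=x)) (\<alpha>(1:=x))) =
            (\<Sum>x<e 1. if x = c then F2 (\<iota> 2) (\<alpha>(1:=x)) (\<alpha>(1:=x)) * (\<Prod>v\<in>{3..n}. Tl' v (\<iota> v) (\<alpha>(1:=x)) (\<alpha>(1:=x))) else 0)"
      proof (rule sum.cong[OF refl])
        fix x
        have "(\<Prod>v\<in>{1..n}. Tl v (\<iota> v) (\<alpha>(1:=x)) (\<alpha>(1:=x))) =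
          F1 (\<iota> 1) (\<alpha>(1:=x)) (\<alpha>(1:=x)) * (F2 (\<iota> 2) (\<alpha>(1:=x)) (\<alpha>(1:=x)) * (\<Prod>v\<in>{3..n}. Tl' v (\<iota> v) (\<alpha>(1:=x)) (\<alpha>(1:=x))))"
        proof -
          have "(\<Prod>v\<in>{3..n}. Tl v (\<iota> v) (\<alpha>(1:=x)) (\<alpha>(1:=x))) = (\<Prod>v\<in>{3..n}. Tl' v (\<iota> v) (\<alpha>(1:=x)) (\<alpha>(1:=x)))"
            by (rule prod.cong) (auto simp: Tl_def)
          then show ?thesis unfolding V1(1) using V1(2,3) by (simp add: Tl_def)
        qed
        moreover have "F1 (\<iota> 1) (\<alpha>(1:=x)) (\<alpha>(1:=x)) = (if x = c then 1 else 0)"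
          unfolding F1_def idx1_def c_def by simp
        ultimately show "(\<Prod>v\<in>{1..n}. Tl v (\<iota> v) (\<alpha>(1:=x)) (\<alpha>(1:=x))) =
            (if x = c then F2 (\<iota> 2) (\<alpha>(1:=x)) (\<alpha>(1:=x)) * (\<Prod>v\<in>{3..n}. Tl' v (\<iota> v) (\<alpha>(1:=x)) (\<alpha>(1:=x))) else 0)"
          by simp
      qed
      also have "\<dots> = F2 (\<iota> 2) (\<alpha>(1:=c)) (\<alpha>(1:=c)) * (\<Prod>v\<in>{3..n}. Tl' v (\<iota> v) (\<alpha>(1:=c)) (\<alpha>(1:=c)))"
        using c(1) by (subst sum.delta) auto
      also have "\<dots> = Tl' 2 (prod_encode (\<iota> 1, \<iota> 2)) \<alpha> \<alpha> * (\<Prod>v\<in>{3..n}. Tl' v (\<iota> v) \<alpha> \<alpha>)"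
      proof -
        have "F2 (\<iota> 2) (\<alpha>(1:=c)) (\<alpha>(1:=c)) = Tl' 2 (prod_encode (\<iota> 1, \<iota> 2)) (\<alpha>(1:=c)) (\<alpha>(1:=c))"
          unfolding F2_def idx2_def using c by simp
        also have "\<dots> = Tl' 2 (prod_encode (\<iota> 1, \<iota> 2)) \<alpha> \<alpha>"
          using local_ok_upd[OF l2] E1(2) by blast
        finally have A: "F2 (\<iota> 2) (\<alpha>(1:=c)) (\<alpha>(1:=c)) = Tl' 2 (prod_encode (\<iota> 1, \<iota> 2)) \<alpha> \<alpha>" .
        have B: "(\<Prod>v\<in>{3..n}. Tl' v (\<iota> v) (\<alpha>(1:=c)) (\<alpha>(1:=c))) = (\<Prod>v\<in>{3..n}. Tl' v (\<iota> v) \<alpha> \<alpha>)"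
        proof (rule prod.cong[OF refl])
          fix v assume "v \<in> {3..n}"
          then have "local_ok {2..m} src tgt v (Tl' v)" using loc' by auto
          then show "Tl' v (\<iota> v) (\<alpha>(1:=c)) (\<alpha>(1:=c)) = Tl' v (\<iota> v) \<alpha> \<alpha>"
            using local_ok_upd E1(2) by blast
        qed
        show ?thesis using A B by simp
      qed
      finally show "Tl' 2 (prod_encode (\<iota> 1, \<iota> 2)) \<alpha> \<alpha> * (\<Prod>v\<in>{3..n}. Tl' v (\<iota> v) \<alpha> \<alpha>) =
          (\<Sum>x<e 1. \<Prod>v\<in>{1..n}. Tl v (\<iota> v) (\<alpha>(1:=x)) (\<alpha>(1:=x)))" by simp
    qed
    also have "\<dots> = (\<Sum>x<e 1. \<Sum>\<alpha>\<in>PiE {2..m} (\<lambda>s. {..<e s}). \<Prod>v\<in>{1..n}. Tl v (\<iota> v) (\<alpha>(1:=x)) (\<alpha>(1:=x)))"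
      by (rule sum.swap)
    also have "\<dots> = (\<Sum>\<alpha>\<in>PiE (insert 1 {2..m}) (\<lambda>s. {..<e s}). \<Prod>v\<in>{1..n}. Tl v (\<iota> v) \<alpha> \<alpha>)"
      by (rule sum_PiE_insert[OF E1(2), symmetric])
    finally show "T \<iota> = (\<Sum>\<alpha>\<in>PiE {1..m} (\<lambda>s. {..<e s}). \<Prod>v\<in>{1..n}. Tl v (\<iota> v) \<alpha> \<alpha>)"
      unfolding E1(1)[symmetric] .
  qed
qed

theorem proposition6p1:
  fixes n m :: nat and src tgt e :: "nat \<Rightarrow> nat" and P :: "nat \<Rightarrow> nat set"
  assumes "n \<ge> 2" and "m \<ge> 1"
    and "\<forall>s\<in>{1..m}. src s \<in> {1..n} \<and> tgt s \<in> {1..n}"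
    and "\<forall>j\<in>{1..n}. finite (P j)"
    and "{src 1, tgt 1} = {1, 2}"
    and "\<forall>s\<in>{2..m}. src s \<noteq> 1 \<and> tgt s \<noteq> 1"
    and "card (P 1) \<le> e 1"
  shows "TNS {1..n} {1..m} src tgt e P =
         merge12 n P ` TNS {2..n} {2..m} src tgt e (P(2 := prod_encode ` (P 1 \<times> P 2)))"
  using dir1[where n=n and m=m and src=src and tgt=tgt and e=e and P=P, OF assms]
        dir2[where n=n and m=m and src=src and tgt=tgt and e=e and P=P, OF assms] by blast

end
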